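(* Let a group $G$ act faithfully and uniformly equicontinuously on a cofinite graph $\Gamma$, let $I$ be a fundamental system of $G$-invariant compatible cofinite entourages of $\Gamma$, let $\widehat{\Gamma}=\varprojlim_{R\in I}\Gamma/R$ and $\widehat{G}=\varprojlim_{R\in I}G/N_R$, with $\widehat{G}$ acting on $\widehat{\Gamma}$ by $(N_R[g_R])_R\cdot(R[x_R])_R=(R[g_R\cdot x_R])_R$. For $R\in I$ let $\overline{R}$ be the closure of $R$ in $\widehat{\Gamma}\times\widehat{\Gamma}$, let $\overline{N_R}$ be the closure of $N_R$ in $\widehat{G}\times\widehat{G}$, and let $N_{\overline R}=\{(g,h)\in\widehat{G}\times\widehat{G}:(g\cdot x,h\cdot x)\in\overline{R}\text{ for all }x\in\widehat{\Gamma}\}$. Then $\Phi_1=\{N_{\overline R}\mid R\in I\}$ and $\Phi_2=\{\overline{N_R}\mid R\in I\}$ are fundamental systems of cofinite congruences on $\widehat{G}$ defining equivalent uniformities on $\widehat{G}$.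
   Context: A graph $\Gamma$ is a set $\Gamma=V(\Gamma)\sqcup E(\Gamma)$ with maps $s,t\colon E\to V$ and a fixed-point-free involution $e\mapsto\overline e$ with $s(\overline e)=t(e)$, $t(\overline e)=s(e)$. An equivalence relation $R$ on $\Gamma$ is compatible if $R\subseteq (V\times V)\cup(E\times E)$, $(e,e')\in R$ implies $(s(e),s(e')),(t(e),t(e')),(\overline e,\overline{e'})\in R$, and $(e,\overline e)\notin R$. A cofinite entourage is an entourage that is an equivalence relation with finitely many classes; a cofinite congruence on a group is a cofinite equivalence relation $N$ with $(a,b),(c,d)\in N\Rightarrow(ac,bd)\in N$. A cofinite graph is a graph with a Hausdorff uniformity in which compatible cofinite entourages form a fundamental system. A group $G$ acts on $\Gamma$ if it acts on the set $\Gamma$ preserving vertices and edges, commuting with $s,t,\overline{\phantom e}$, and there is a $G$-invariant orientation. The action is uniformly equicontinuous if for each entourage $W$ there is an entourage $V$ with $(g\times g)[V]\subseteq W$ for all $g\in G$; it is faithful if every $g\ne 1$ moves some point. $R$ is $G$-invariant if $(g\times g)[R]\subseteq R$ for all $g$. $N_R=\{(g,h)\in G\times G:(g\cdot x,h\cdot x)\in R\ \forall x\in\Gamma\}$, a cofinite congruence on $G$; $G$ carries the uniformity with fundamental system $\{N_R: R\in I\}$, and $\widehat G$, $\widehat\Gamma$ are the corresponding completions, with $G\subseteq\widehat G$ and $\Gamma\subseteq\widehat\Gamma$. *)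

theory Defs
  imports "HOL-Analysis.Analysis" "HOL-Algebra.Group_Action"
begin

definition is_graph :: "'x set \<Rightarrow> 'x set \<Rightarrow> ('x \<Rightarrow> 'x) \<Rightarrow> ('x \<Rightarrow> 'x) \<Rightarrow> ('x \<Rightarrow> 'x) \<Rightarrow> bool" where
  "is_graph V E s t bar \<longleftrightarrow> V \<inter> E = {} \<and>
     (\<forall>e\<in>E. s e \<in> V \<and> t e \<in> V \<and> bar e \<in> E \<and> bar (bar e) = e \<and> bar e \<noteq> e
            \<and> s (bar e) = t e \<and> t (bar e) = s e)"

definition compatible_rel :: "'x set \<Rightarrow> 'x set \<Rightarrow> ('x \<Rightarrow> 'x) \<Rightarrow> ('x \<Rightarrow> 'x) \<Rightarrow> ('x \<Rightarrow> 'x) \<Rightarrow> 'x rel \<Rightarrow> bool" where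
  "compatible_rel V E s t bar R \<longleftrightarrow> equiv (V \<union> E) R \<and> R \<subseteq> (V \<times> V) \<union> (E \<times> E) \<and>
     (\<forall>(e, e')\<in>R. e \<in> E \<longrightarrow> (s e, s e') \<in> R \<and> (t e, t e') \<in> R \<and> (bar e, bar e') \<in> R) \<and>
     (\<forall>e\<in>E. (e, bar e) \<notin> R)"

definition cofinite_equiv :: "'a set \<Rightarrow> 'a rel \<Rightarrow> bool" where
  "cofinite_equiv X R \<longleftrightarrow> equiv X R \<and> finite (X // R)"

definition is_uniformity :: "'a set \<Rightarrow> 'a rel set \<Rightarrow> bool" where
  "is_uniformity X U \<longleftrightarrow> U \<noteq> {} \<and>
     (\<forall>W\<in>U. Id_on X \<subseteq> W \<and> W \<subseteq> X \<times> X) \<and>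
     (\<forall>W\<in>U. \<forall>W'. W \<subseteq> W' \<and> W' \<subseteq> X \<times> X \<longrightarrow> W' \<in> U) \<and>
     (\<forall>W\<in>U. \<forall>W'\<in>U. W \<inter> W' \<in> U) \<and>
     (\<forall>W\<in>U. W\<inverse> \<in> U) \<and>
     (\<forall>W\<in>U. \<exists>W'\<in>U. W' O W' \<subseteq> W)"

definition hausdorff_uniformity :: "'a set \<Rightarrow> 'a rel set \<Rightarrow> bool" where
  "hausdorff_uniformity X U \<longleftrightarrow> is_uniformity X U \<and> \<Inter>U = Id_on X"

definition fundamental_system :: "'a rel set \<Rightarrow> 'a rel set \<Rightarrow> bool" where
  "fundamental_system U B \<longleftrightarrow> B \<subseteq> U \<and> (\<forall>W\<in>U. \<exists>W'\<in>B. W' \<subseteq> W)"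

definition cofinite_graph :: "'x set \<Rightarrow> 'x set \<Rightarrow> ('x \<Rightarrow> 'x) \<Rightarrow> ('x \<Rightarrow> 'x) \<Rightarrow> ('x \<Rightarrow> 'x) \<Rightarrow> 'x rel set \<Rightarrow> bool" where
  "cofinite_graph V E s t bar U \<longleftrightarrow> is_graph V E s t bar \<and> hausdorff_uniformity (V \<union> E) U \<and>
     fundamental_system U {R\<in>U. compatible_rel V E s t bar R \<and> cofinite_equiv (V \<union> E) R}"

definition graph_action :: "('g, 'm) monoid_scheme \<Rightarrow> 'x set \<Rightarrow> 'x set \<Rightarrow> ('x \<Rightarrow> 'x) \<Rightarrow> ('x \<Rightarrow> 'x) \<Rightarrow> ('x \<Rightarrow> 'x) \<Rightarrow> ('g \<Rightarrow> 'x \<Rightarrow> 'x) \<Rightarrow> bool" where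
  "graph_action G V E s t bar act \<longleftrightarrow> group_action G (V \<union> E) act \<and>
     (\<forall>g\<in>carrier G. act g ` V \<subseteq> V \<and> act g ` E \<subseteq> E \<and>
        (\<forall>e\<in>E. s (act g e) = act g (s e) \<and> t (act g e) = act g (t e) \<and> bar (act g e) = act g (bar e))) \<and>
     (\<exists>Or \<subseteq> E. (\<forall>e\<in>E. (e \<in> Or) = (bar e \<notin> Or)) \<and> (\<forall>g\<in>carrier G. act g ` Or \<subseteq> Or))"

definition pair_map :: "('a \<Rightarrow> 'b) \<Rightarrow> 'a \<times> 'a \<Rightarrow> 'b \<times> 'b" where
  "pair_map f = (\<lambda>(x, y). (f x, f y))"

definition unif_equicontinuous :: "('g, 'm) monoid_scheme \<Rightarrow> ('g \<Rightarrow> 'x \<Rightarrow> 'x) \<Rightarrow> 'x rel set \<Rightarrow> bool" where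
  "unif_equicontinuous G act U \<longleftrightarrow>
     (\<forall>W\<in>U. \<exists>W'\<in>U. \<forall>g\<in>carrier G. pair_map (act g) ` W' \<subseteq> W)"

definition faithful_action :: "('g, 'm) monoid_scheme \<Rightarrow> 'x set \<Rightarrow> ('g \<Rightarrow> 'x \<Rightarrow> 'x) \<Rightarrow> bool" where
  "faithful_action G X act \<longleftrightarrow> (\<forall>g\<in>carrier G. g \<noteq> \<one>\<^bsub>G\<^esub> \<longrightarrow> (\<exists>x\<in>X. act g x \<noteq> x))"

definition invariant_rel :: "('g, 'm) monoid_scheme \<Rightarrow> ('g \<Rightarrow> 'x \<Rightarrow> 'x) \<Rightarrow> 'x rel \<Rightarrow> bool" where
  "invariant_rel G act R \<longleftrightarrow> (\<forall>g\<in>carrier G. pair_map (act g) ` R \<subseteq> R)"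

definition NR :: "('g, 'm) monoid_scheme \<Rightarrow> 'x set \<Rightarrow> ('g \<Rightarrow> 'x \<Rightarrow> 'x) \<Rightarrow> 'x rel \<Rightarrow> 'g rel" where
  "NR G X act R = {(g, h) \<in> carrier G \<times> carrier G. \<forall>x\<in>X. (act g x, act h x) \<in> R}"

text \<open>$\widehat\Gamma = \varprojlim_{R\in I} \Gamma/R$: compatible families of classes.\<close>
definition hatX :: "'x set \<Rightarrow> 'x rel set \<Rightarrow> ('x rel \<Rightarrow> 'x set) set" where
  "hatX X I = {c \<in> (\<Pi>\<^sub>E R\<in>I. X // R). \<forall>R\<in>I. \<forall>S\<in>I. R \<subseteq> S \<longrightarrow> c R \<subseteq> c S}"

definition embX :: "'x rel set \<Rightarrow> 'x \<Rightarrow> ('x rel \<Rightarrow> 'x set)" where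
  "embX I x = (\<lambda>R\<in>I. R `` {x})"

text \<open>$\widehat G = \varprojlim_{R\in I} G/N_R$.\<close>
definition hatG :: "('g, 'm) monoid_scheme \<Rightarrow> 'x set \<Rightarrow> ('g \<Rightarrow> 'x \<Rightarrow> 'x) \<Rightarrow> 'x rel set \<Rightarrow> ('x rel \<Rightarrow> 'g set) set" where
  "hatG G X act I = {d \<in> (\<Pi>\<^sub>E R\<in>I. carrier G // NR G X act R).
      \<forall>R\<in>I. \<forall>S\<in>I. R \<subseteq> S \<longrightarrow> d R \<subseteq> d S}"

definition embG :: "('g, 'm) monoid_scheme \<Rightarrow> 'x set \<Rightarrow> ('g \<Rightarrow> 'x \<Rightarrow> 'x) \<Rightarrow> 'x rel set \<Rightarrow> 'g \<Rightarrow> ('x rel \<Rightarrow> 'g set)" where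
  "embG G X act I g = (\<lambda>R\<in>I. NR G X act R `` {g})"

text \<open>Action $(N_R[g_R])_R\cdot(R[x_R])_R = (R[g_R\cdot x_R])_R$ (via chosen representatives).\<close>
definition hat_act :: "('g \<Rightarrow> 'x \<Rightarrow> 'x) \<Rightarrow> 'x rel set \<Rightarrow> ('x rel \<Rightarrow> 'g set) \<Rightarrow> ('x rel \<Rightarrow> 'x set) \<Rightarrow> ('x rel \<Rightarrow> 'x set)" where
  "hat_act act I d c = (\<lambda>R\<in>I. R `` {act (SOME g. g \<in> d R) (SOME x. x \<in> c R)})"

definition hat_mult :: "('g, 'm) monoid_scheme \<Rightarrow> 'x set \<Rightarrow> ('g \<Rightarrow> 'x \<Rightarrow> 'x) \<Rightarrow> 'x rel set \<Rightarrow> ('x rel \<Rightarrow> 'g set) \<Rightarrow> ('x rel \<Rightarrow> 'g set) \<Rightarrow> ('x rel \<Rightarrow> 'g set)" where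
  "hat_mult G X act I d e = (\<lambda>R\<in>I. NR G X act R `` {(SOME g. g \<in> d R) \<otimes>\<^bsub>G\<^esub> (SOME h. h \<in> e R)})"

definition topX :: "'x set \<Rightarrow> 'x rel set \<Rightarrow> ('x rel \<Rightarrow> 'x set) topology" where
  "topX X I = subtopology (product_topology (\<lambda>R. discrete_topology (X // R)) I) (hatX X I)"

definition topG :: "('g, 'm) monoid_scheme \<Rightarrow> 'x set \<Rightarrow> ('g \<Rightarrow> 'x \<Rightarrow> 'x) \<Rightarrow> 'x rel set \<Rightarrow> ('x rel \<Rightarrow> 'g set) topology" where
  "topG G X act I = subtopology (product_topology (\<lambda>R. discrete_topology (carrier G // NR G X act R)) I) (hatG G X act I)"

definition closR :: "'x set \<Rightarrow> 'x rel set \<Rightarrow> 'x rel \<Rightarrow> (('x rel \<Rightarrow> 'x set) \<times> ('x rel \<Rightarrow> 'x set)) set" where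
  "closR X I R = (prod_topology (topX X I) (topX X I)) closure_of (pair_map (embX I) ` R)"

definition closNR :: "('g, 'm) monoid_scheme \<Rightarrow> 'x set \<Rightarrow> ('g \<Rightarrow> 'x \<Rightarrow> 'x) \<Rightarrow> 'x rel set \<Rightarrow> 'x rel \<Rightarrow> (('x rel \<Rightarrow> 'g set) \<times> ('x rel \<Rightarrow> 'g set)) set" where
  "closNR G X act I R = (prod_topology (topG G X act I) (topG G X act I)) closure_of
      (pair_map (embG G X act I) ` NR G X act R)"

definition N_closR :: "('g, 'm) monoid_scheme \<Rightarrow> 'x set \<Rightarrow> ('g \<Rightarrow> 'x \<Rightarrow> 'x) \<Rightarrow> 'x rel set \<Rightarrow> 'x rel \<Rightarrow> (('x rel \<Rightarrow> 'g set) \<times> ('x rel \<Rightarrow> 'g set)) set" where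
  "N_closR G X act I R = {(g, h) \<in> hatG G X act I \<times> hatG G X act I.
      \<forall>x\<in>hatX X I. (hat_act act I g x, hat_act act I h x) \<in> closR X I R}"

definition cofinite_congruence :: "'a set \<Rightarrow> ('a \<Rightarrow> 'a \<Rightarrow> 'a) \<Rightarrow> 'a rel \<Rightarrow> bool" where
  "cofinite_congruence X mul N \<longleftrightarrow> cofinite_equiv X N \<and>
     (\<forall>(a, b)\<in>N. \<forall>(c, d)\<in>N. (mul a c, mul b d) \<in> N)"

definition fund_system_cofinite_congruences :: "'a set \<Rightarrow> ('a \<Rightarrow> 'a \<Rightarrow> 'a) \<Rightarrow> 'a rel set \<Rightarrow> bool" where
  "fund_system_cofinite_congruences X mul \<Phi> \<longleftrightarrow> \<Phi> \<noteq> {} \<and>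
     (\<forall>N\<in>\<Phi>. cofinite_congruence X mul N) \<and>
     (\<forall>A\<in>\<Phi>. \<forall>B\<in>\<Phi>. \<exists>C\<in>\<Phi>. C \<subseteq> A \<inter> B)"

definition equivalent_bases :: "'a rel set \<Rightarrow> 'a rel set \<Rightarrow> bool" where
  "equivalent_bases \<Phi> \<Psi> \<longleftrightarrow> (\<forall>A\<in>\<Phi>. \<exists>B\<in>\<Psi>. B \<subseteq> A) \<and> (\<forall>B\<in>\<Psi>. \<exists>A\<in>\<Phi>. A \<subseteq> B)"

end

theory Submission
  imports Defs
begin


locale gsys =
  fixes A :: "'a set" and Q :: "'i set \<Rightarrow> 'a rel" and I :: "'i set set"
  assumes eqv: "\<And>R. R \<in> I \<Longrightarrow> equiv A (Q R)"
    and mono: "\<And>R S. R \<in> I \<Longrightarrow> S \<in> I \<Longrightarrow> R \<subseteq> S \<Longrightarrow> Q R \<subseteq> Q S"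
    and dir: "\<And>R S. R \<in> I \<Longrightarrow> S \<in> I \<Longrightarrow> \<exists>T\<in>I. T \<subseteq> R \<and> T \<subseteq> S"
begin

definition ghat where
  "ghat = {c \<in> (\<Pi>\<^sub>E R\<in>I. A // Q R). \<forall>R\<in>I. \<forall>S\<in>I. R \<subseteq> S \<longrightarrow> c R \<subseteq> c S}"
definition gemb where "gemb a = (\<lambda>R\<in>I. Q R `` {a})"
definition gtop where
  "gtop = subtopology (product_topology (\<lambda>R. discrete_topology (A // Q R)) I) ghat"

lemma class_eq: "R \<in> I \<Longrightarrow> X \<in> A // Q R \<Longrightarrow> a \<in> X \<Longrightarrow> X = Q R `` {a}"
  by (metis eqv equiv_class_eq_iff quotientE Image_singleton_iff)

lemma ghat_in: "c \<in> ghat \<Longrightarrow> R \<in> I \<Longrightarrow> c R \<in> A // Q R"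
  unfolding ghat_def by auto

lemma ghat_eq: "c \<in> ghat \<Longrightarrow> T \<in> I \<Longrightarrow> R \<in> I \<Longrightarrow> T \<subseteq> R \<Longrightarrow> a \<in> c T \<Longrightarrow> c R = Q R `` {a}"
  using class_eq[of R "c R" a] ghat_in unfolding ghat_def by blast

lemma ghat_ne: "c \<in> ghat \<Longrightarrow> R \<in> I \<Longrightarrow> \<exists>a. a \<in> c R"
  using ghat_in eqv in_quotient_imp_non_empty by fastforce

lemma ghat_sub: "c \<in> ghat \<Longrightarrow> R \<in> I \<Longrightarrow> c R \<subseteq> A"
  using ghat_in eqv in_quotient_imp_subset by blast

lemma gemb_in: "a \<in> A \<Longrightarrow> gemb a \<in> ghat"
  unfolding ghat_def gemb_def using mono by (auto intro: quotientI)

lemma dir_fin: "finite F \<Longrightarrow> F \<subseteq> I \<Longrightarrow> R \<in> I \<Longrightarrow> \<exists>T\<in>I. T \<subseteq> R \<and> (\<forall>i\<in>F. T \<subseteq> i)"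
proof (induction F rule: finite_induct)
  case empty then show ?case by blast
next
  case (insert x F)
  then obtain T where "T \<in> I" "T \<subseteq> R" "\<forall>i\<in>F. T \<subseteq> i" by auto
  moreover obtain T' where "T' \<in> I" "T' \<subseteq> T" "T' \<subseteq> x" using dir[of T x] insert \<open>T \<in> I\<close> by auto
  ultimately show ?case by (intro bexI[of _ T']) auto
qed

lemma topspace_gtop: "topspace gtop = ghat"
  unfolding gtop_def by (auto simp: ghat_def topspace_product_topology)

lemma closure_eq:
  assumes R0: "R0 \<in> I"
  shows "prod_topology gtop gtop closure_of (pair_map gemb ` Q R0)
       = {(c, c'). c \<in> ghat \<and> c' \<in> ghat \<and> c R0 = c' R0}"
proof (intro equalityI subsetI)
  fix z assume z: "z \<in> prod_topology gtop gtop closure_of (pair_map gemb ` Q R0)"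
  obtain c c' where zc: "z = (c, c')" by (cases z) blast
  have ztop: "z \<in> topspace (prod_topology gtop gtop)" using closure_of_subset_topspace[THEN subsetD, OF z] .
  then have top: "c \<in> ghat" "c' \<in> ghat" using zc topspace_gtop by (simp_all add: topspace_prod_topology)
  have cm: "continuous_map gtop (discrete_topology (A // Q R0)) (\<lambda>f. f R0)"
    unfolding gtop_def
    by (rule continuous_map_from_subtopology, rule continuous_map_product_projection[OF R0, where X="\<lambda>R. discrete_topology (A // Q R)"])
  have c1: "continuous_map (prod_topology gtop gtop) (discrete_topology (A // Q R0)) (\<lambda>z. fst z R0)"
    using continuous_map_compose[OF continuous_map_fst cm] by (simp add: o_def)
  have c2: "continuous_map (prod_topology gtop gtop) (discrete_topology (A // Q R0)) (\<lambda>z. snd z R0)"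
    using continuous_map_compose[OF continuous_map_snd cm] by (simp add: o_def)
  define T where "T = {z \<in> topspace (prod_topology gtop gtop). fst z R0 \<in> {c R0}}
     \<inter> {z \<in> topspace (prod_topology gtop gtop). snd z R0 \<in> {c' R0}}"
  have "openin (prod_topology gtop gtop) T"
    unfolding T_def
    apply (intro openin_Int openin_continuous_map_preimage[OF c1] openin_continuous_map_preimage[OF c2])
    using top R0 ghat_in by auto
  moreover have "z \<in> T" using ztop zc unfolding T_def by simp
  ultimately obtain y where y: "y \<in> pair_map gemb ` Q R0" "y \<in> T"
    using z unfolding in_closure_of by blast
  then obtain a b where ab: "(a, b) \<in> Q R0" "y = (gemb a, gemb b)"
    by (auto simp: pair_map_def)
  have "Q R0 `` {a} = Q R0 `` {b}" using ab eqv[OF R0] equiv_class_eq by metis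
  then show "z \<in> {(c, c'). c \<in> ghat \<and> c' \<in> ghat \<and> c R0 = c' R0}"
  proof -
    have "gemb a R0 = c R0" "gemb b R0 = c' R0" using y ab unfolding T_def by auto
    then show ?thesis using zc top R0 \<open>Q R0 `` {a} = Q R0 `` {b}\<close> by (simp add: gemb_def)
  qed
next
  fix z assume "z \<in> {(c, c'). c \<in> ghat \<and> c' \<in> ghat \<and> c R0 = c' R0}"
  then obtain c c' where zc: "z = (c, c')" and cc: "c \<in> ghat" "c' \<in> ghat" "c R0 = c' R0" by auto
  show "z \<in> prod_topology gtop gtop closure_of (pair_map gemb ` Q R0)"
    unfolding in_closure_of
  proof (intro conjI allI impI)
    show "z \<in> topspace (prod_topology gtop gtop)"
      using zc cc by (simp add: topspace_prod_topology topspace_gtop)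
  next
    fix T assume T: "z \<in> T \<and> openin (prod_topology gtop gtop) T"
    have "\<exists>U V. openin gtop U \<and> openin gtop V \<and> c \<in> U \<and> c' \<in> V \<and> U \<times> V \<subseteq> T"
      using T zc unfolding openin_prod_topology_alt by blast
    then obtain U V where UV: "openin gtop U" "openin gtop V" "c \<in> U" "c' \<in> V" "U \<times> V \<subseteq> T"
      by blast
    obtain U' where U': "openin (product_topology (\<lambda>R. discrete_topology (A // Q R)) I) U'" "U = U' \<inter> ghat"
      using UV(1) unfolding gtop_def openin_subtopology by blast
    obtain V' where V': "openin (product_topology (\<lambda>R. discrete_topology (A // Q R)) I) V'" "V = V' \<inter> ghat"
      using UV(2) unfolding gtop_def openin_subtopology by blast
    have cU': "c \<in> U'" and cV': "c' \<in> V'" using U'(2) V'(2) UV(3,4) by auto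
    have "\<exists>Uc. finite {i \<in> I. Uc i \<noteq> topspace (discrete_topology (A // Q i))} \<and>
        (\<forall>i\<in>I. openin (discrete_topology (A // Q i)) (Uc i)) \<and> c \<in> Pi\<^sub>E I Uc \<and> Pi\<^sub>E I Uc \<subseteq> U'"
      using bspec[OF U'(1)[unfolded openin_product_topology_alt] cU'] .
    then obtain Uc where Uc: "finite {i \<in> I. Uc i \<noteq> topspace (discrete_topology (A // Q i))}"
        "c \<in> Pi\<^sub>E I Uc" "Pi\<^sub>E I Uc \<subseteq> U'"
      by blast
    have "\<exists>Vc. finite {i \<in> I. Vc i \<noteq> topspace (discrete_topology (A // Q i))} \<and>
        (\<forall>i\<in>I. openin (discrete_topology (A // Q i)) (Vc i)) \<and> c' \<in> Pi\<^sub>E I Vc \<and> Pi\<^sub>E I Vc \<subseteq> V'"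
      using bspec[OF V'(1)[unfolded openin_product_topology_alt] cV'] .
    then obtain Vc where Vc: "finite {i \<in> I. Vc i \<noteq> topspace (discrete_topology (A // Q i))}"
        "c' \<in> Pi\<^sub>E I Vc" "Pi\<^sub>E I Vc \<subseteq> V'"
      by blast
    define F where "F = {i \<in> I. Uc i \<noteq> topspace (discrete_topology (A // Q i))} \<union> {i \<in> I. Vc i \<noteq> topspace (discrete_topology (A // Q i))}"
    have F: "finite F" "F \<subseteq> I" unfolding F_def using Uc(1) Vc(1) by auto
    obtain T0 where T0: "T0 \<in> I" "T0 \<subseteq> R0" "\<forall>i\<in>F. T0 \<subseteq> i"
      using dir_fin[OF F R0] by blast
    obtain a where a: "a \<in> c T0" using ghat_ne cc T0 by blast
    obtain b where b: "b \<in> c' T0" using ghat_ne cc T0 by blast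
    have aA: "a \<in> A" and bA: "b \<in> A" using a b ghat_sub cc T0 by blast+
    have ga: "gemb a \<in> Pi\<^sub>E I Uc"
    proof -
      have "gemb a i \<in> Uc i" if i: "i \<in> I" for i
      proof (cases "Uc i = topspace (discrete_topology (A // Q i))")
        case True then show ?thesis using aA i by (auto simp: gemb_def intro: quotientI)
      next
        case False
        then have "T0 \<subseteq> i" using T0 i unfolding F_def by blast
        then have "c i = Q i `` {a}" using ghat_eq cc T0 a i by blast
        then show ?thesis using Uc(2) i by (auto simp: gemb_def PiE_iff)
      qed
      then show ?thesis by (auto simp: gemb_def)
    qed
    have gb: "gemb b \<in> Pi\<^sub>E I Vc"
    proof -
      have "gemb b i \<in> Vc i" if i: "i \<in> I" for i
      proof (cases "Vc i = topspace (discrete_topology (A // Q i))")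
        case True then show ?thesis using bA i by (auto simp: gemb_def intro: quotientI)
      next
        case False
        then have "T0 \<subseteq> i" using T0 i unfolding F_def by blast
        then have "c' i = Q i `` {b}" using ghat_eq cc T0 b i by blast
        then show ?thesis using Vc(2) i by (auto simp: gemb_def PiE_iff)
      qed
      then show ?thesis by (auto simp: gemb_def)
    qed
    have "c R0 = Q R0 `` {a}" "c' R0 = Q R0 `` {b}" using ghat_eq cc T0 a b R0 by blast+
    then have ab: "(a, b) \<in> Q R0" using cc(3) eq_equiv_class_iff eqv[OF R0] aA bA by metis
    have "(gemb a, gemb b) \<in> U \<times> V" using ga gb Uc(3) Vc(3) U'(2) V'(2) gemb_in aA bA by blast
    then show "\<exists>y. y \<in> pair_map gemb ` Q R0 \<and> y \<in> T"
      using ab UV(5) by (force simp: pair_map_def)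
  qed
qed

end



locale thm9 =
  fixes G :: "('g, 'm) monoid_scheme" and X :: "'x set" and act :: "'g \<Rightarrow> 'x \<Rightarrow> 'x" and I :: "'x rel set"
  assumes grp: "group G" and ga: "group_action G X act"
    and eqvR: "\<And>R. R \<in> I \<Longrightarrow> equiv X R"
    and finR: "\<And>R. R \<in> I \<Longrightarrow> finite (X // R)"
    and invR: "\<And>R. R \<in> I \<Longrightarrow> invariant_rel G act R"
    and dirI: "\<And>R S. R \<in> I \<Longrightarrow> S \<in> I \<Longrightarrow> \<exists>T\<in>I. T \<subseteq> R \<and> T \<subseteq> S"
    and neI: "I \<noteq> {}"
begin

abbreviation "N R \<equiv> NR G X act R"

lemma act_in: "g \<in> carrier G \<Longrightarrow> x \<in> X \<Longrightarrow> act g x \<in> X"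
  using group_action.element_image[OF ga] by blast

lemma act_mult: "g \<in> carrier G \<Longrightarrow> h \<in> carrier G \<Longrightarrow> x \<in> X \<Longrightarrow> act (g \<otimes>\<^bsub>G\<^esub> h) x = act g (act h x)"
  using group_action.composition_rule[OF ga] by blast

lemma Rsym: "R \<in> I \<Longrightarrow> (a, b) \<in> R \<Longrightarrow> (b, a) \<in> R"
  using eqvR unfolding equiv_def sym_on_def by blast

lemma Rtrans: "R \<in> I \<Longrightarrow> (a, b) \<in> R \<Longrightarrow> (b, c) \<in> R \<Longrightarrow> (a, c) \<in> R"
  using eqvR unfolding equiv_def trans_on_def by blast

lemma Rsub: "R \<in> I \<Longrightarrow> (a, b) \<in> R \<Longrightarrow> a \<in> X \<and> b \<in> X"
  using eqvR unfolding equiv_def by blast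

lemma Rrefl: "R \<in> I \<Longrightarrow> a \<in> X \<Longrightarrow> (a, a) \<in> R"
  using eqvR unfolding equiv_def refl_on_def by blast

lemma inv_pair: "R \<in> I \<Longrightarrow> g \<in> carrier G \<Longrightarrow> (x, y) \<in> R \<Longrightarrow> (act g x, act g y) \<in> R"
  using invR unfolding invariant_rel_def pair_map_def by blast

lemma NR_equiv: "R \<in> I \<Longrightarrow> equiv (carrier G) (N R)"
proof (rule equivI)
  assume R: "R \<in> I"
  show "N R \<subseteq> carrier G \<times> carrier G" unfolding NR_def by blast
  show "refl_on (carrier G) (N R)" unfolding refl_on_def NR_def using Rrefl[OF R] act_in by blast
  show "sym (N R)" unfolding sym_on_def NR_def using Rsym[OF R] by blast
  show "trans (N R)" unfolding trans_on_def NR_def using Rtrans[OF R] by blast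
qed

lemma NR_mono: "R \<subseteq> S \<Longrightarrow> N R \<subseteq> N S"
  unfolding NR_def by blast

lemma NR_wd: "R \<in> I \<Longrightarrow> (g, g') \<in> N R \<Longrightarrow> (x, x') \<in> R \<Longrightarrow> (act g x, act g' x') \<in> R"
proof -
  assume R: "R \<in> I" and gg: "(g, g') \<in> N R" and xx: "(x, x') \<in> R"
  have g: "g \<in> carrier G" using gg unfolding NR_def by blast
  have x': "x' \<in> X" using Rsub[OF R xx] by blast
  have "(act g x, act g x') \<in> R" using inv_pair[OF R g xx] .
  moreover have "(act g x', act g' x') \<in> R" using gg x' unfolding NR_def by blast
  ultimately show ?thesis using Rtrans[OF R] by blast
qed

lemma NR_mult: "R \<in> I \<Longrightarrow> (g, g') \<in> N R \<Longrightarrow> (h, h') \<in> N R \<Longrightarrow> (g \<otimes>\<^bsub>G\<^esub> h, g' \<otimes>\<^bsub>G\<^esub> h') \<in> N R"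
proof -
  assume R: "R \<in> I" and gg: "(g, g') \<in> N R" and hh: "(h, h') \<in> N R"
  have c: "g \<in> carrier G" "g' \<in> carrier G" "h \<in> carrier G" "h' \<in> carrier G"
    using gg hh unfolding NR_def by blast+
  have m: "g \<otimes>\<^bsub>G\<^esub> h \<in> carrier G" "g' \<otimes>\<^bsub>G\<^esub> h' \<in> carrier G"
    using monoid.m_closed[OF group.is_monoid[OF grp] c(1) c(3)] monoid.m_closed[OF group.is_monoid[OF grp] c(2) c(4)] by blast+
  have all: "(act (g \<otimes>\<^bsub>G\<^esub> h) x, act (g' \<otimes>\<^bsub>G\<^esub> h') x) \<in> R" if x: "x \<in> X" for x
  proof -
    have "(act h x, act h' x) \<in> R" using hh x unfolding NR_def by blast
    then have "(act g (act h x), act g' (act h' x)) \<in> R" using NR_wd[OF R gg] by blast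
    then show ?thesis using act_mult[OF c(1) c(3) x] act_mult[OF c(2) c(4) x] by simp
  qed
  show ?thesis unfolding NR_def using m all by blast
qed

lemma NR_iff: "R \<in> I \<Longrightarrow> g \<in> carrier G \<Longrightarrow> h \<in> carrier G \<Longrightarrow>
   (g, h) \<in> N R \<longleftrightarrow> (\<forall>x\<in>X. R `` {act g (SOME y. y \<in> R `` {x})} = R `` {act h (SOME y. y \<in> R `` {x})})"
proof
  assume R: "R \<in> I" and g: "g \<in> carrier G" and h: "h \<in> carrier G" and gh: "(g, h) \<in> N R"
  show "\<forall>x\<in>X. R `` {act g (SOME y. y \<in> R `` {x})} = R `` {act h (SOME y. y \<in> R `` {x})}"
  proof
    fix x assume x: "x \<in> X"
    have "(x, x) \<in> R" using Rrefl[OF R x] .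
    then have "(SOME y. y \<in> R `` {x}) \<in> R `` {x}" by (meson Image_singleton_iff someI)
    then have "(SOME y. y \<in> R `` {x}) \<in> X" using Rsub[OF R] by blast
    then have "(act g (SOME y. y \<in> R `` {x}), act h (SOME y. y \<in> R `` {x})) \<in> R"
      using gh unfolding NR_def by blast
    then show "R `` {act g (SOME y. y \<in> R `` {x})} = R `` {act h (SOME y. y \<in> R `` {x})}"
      using equiv_class_eq[OF eqvR[OF R]] by blast
  qed
next
  assume R: "R \<in> I" and g: "g \<in> carrier G" and h: "h \<in> carrier G"
    and H: "\<forall>x\<in>X. R `` {act g (SOME y. y \<in> R `` {x})} = R `` {act h (SOME y. y \<in> R `` {x})}"
  have "(act g x, act h x) \<in> R" if x: "x \<in> X" for x
  proof -
    define y where "y = (SOME y. y \<in> R `` {x})"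
    have "(x, x) \<in> R" using Rrefl[OF R x] .
    then have xy: "(x, y) \<in> R" unfolding y_def by (meson Image_singleton_iff someI)
    then have y: "y \<in> X" using Rsub[OF R] by blast
    have "R `` {act g y} = R `` {act h y}" using H x unfolding y_def by blast
    then have 1: "(act g y, act h y) \<in> R"
      using eq_equiv_class_iff[OF eqvR[OF R]] act_in g h y by blast
    have 2: "(act g x, act g y) \<in> R" using inv_pair[OF R g xy] .
    have 3: "(act h y, act h x) \<in> R" using Rsym[OF R inv_pair[OF R h xy]] .
    show ?thesis using Rtrans[OF R 2 Rtrans[OF R 1 3]] .
  qed
  then show "(g, h) \<in> N R" using g h unfolding NR_def by blast
qed

lemma ball_quot: "(\<forall>C\<in>A//r. P C) \<longleftrightarrow> (\<forall>x\<in>A. P (r``{x}))"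
  by (auto simp: quotient_def)

definition psi where "psi R g = (\<lambda>C\<in>X // R. R `` {act g (SOME y. y \<in> C)})"

lemma psi_iff: "R \<in> I \<Longrightarrow> g \<in> carrier G \<Longrightarrow> h \<in> carrier G \<Longrightarrow> (g, h) \<in> N R \<longleftrightarrow> psi R g = psi R h"
proof -
  assume R: "R \<in> I" and g: "g \<in> carrier G" and h: "h \<in> carrier G"
  have "psi R g = psi R h \<longleftrightarrow> (\<forall>C\<in>X//R. R `` {act g (SOME y. y \<in> C)} = R `` {act h (SOME y. y \<in> C)})"
  proof
    assume eq: "psi R g = psi R h"
    show "\<forall>C\<in>X//R. R `` {act g (SOME y. y \<in> C)} = R `` {act h (SOME y. y \<in> C)}"
    proof
      fix C assume C: "C \<in> X // R"
      have "psi R g C = psi R h C" using eq by simp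
      then show "R `` {act g (SOME y. y \<in> C)} = R `` {act h (SOME y. y \<in> C)}" using C by (simp add: psi_def)
    qed
  next
    assume "\<forall>C\<in>X//R. R `` {act g (SOME y. y \<in> C)} = R `` {act h (SOME y. y \<in> C)}"
    then show "psi R g = psi R h" unfolding psi_def by (intro restrict_ext) blast
  qed
  also have "\<dots> \<longleftrightarrow> (\<forall>x\<in>X. R `` {act g (SOME y. y \<in> R `` {x})} = R `` {act h (SOME y. y \<in> R `` {x})})"
    by (rule ball_quot)
  finally show ?thesis using NR_iff[OF R g h] by simp
qed

lemma psi_in: "R \<in> I \<Longrightarrow> g \<in> carrier G \<Longrightarrow> psi R g \<in> (X // R \<rightarrow>\<^sub>E X // R)"
proof -
  assume R: "R \<in> I" and g: "g \<in> carrier G"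
  have "R `` {act g (SOME y. y \<in> C)} \<in> X // R" if C: "C \<in> X // R" for C
  proof -
    have "(SOME y. y \<in> C) \<in> C" using C in_quotient_imp_non_empty[OF eqvR[OF R]] by (simp add: some_in_eq)
    then have "(SOME y. y \<in> C) \<in> X" using C in_quotient_imp_subset[OF eqvR[OF R]] by blast
    then show ?thesis using act_in g by (blast intro: quotientI)
  qed
  then show ?thesis unfolding psi_def by auto
qed

lemma NR_fin: "R \<in> I \<Longrightarrow> finite (carrier G // N R)"
proof -
  assume R: "R \<in> I"
  have sub: "carrier G // N R \<subseteq> (\<lambda>f. {h \<in> carrier G. psi R h = f}) ` (X // R \<rightarrow>\<^sub>E X // R)"
  proof
    fix K assume "K \<in> carrier G // N R"
    then obtain g where g: "g \<in> carrier G" and K: "K = N R `` {g}" by (rule quotientE)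
    have "K = {h \<in> carrier G. (g, h) \<in> N R}"
      using K unfolding NR_def by blast
    also have "\<dots> = {h \<in> carrier G. psi R h = psi R g}"
    proof (rule Collect_cong)
      fix h show "(h \<in> carrier G \<and> (g, h) \<in> N R) = (h \<in> carrier G \<and> psi R h = psi R g)"
        using psi_iff[OF R g, of h] by fastforce
    qed
    finally have "K = {h \<in> carrier G. psi R h = psi R g}" .
    then show "K \<in> (\<lambda>f. {h \<in> carrier G. psi R h = f}) ` (X // R \<rightarrow>\<^sub>E X // R)"
      using psi_in[OF R g] by blast
  qed
  have "finite (X // R \<rightarrow>\<^sub>E X // R)" using finR[OF R] by (simp add: finite_PiE)
  then have "finite ((\<lambda>f. {h \<in> carrier G. psi R h = f}) ` (X // R \<rightarrow>\<^sub>E X // R))" by (rule finite_imageI)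
  then show ?thesis using sub by (rule finite_subset[rotated])
qed

sublocale gX: gsys X "\<lambda>R. R" I
  by unfold_locales (auto intro: eqvR dirI)

sublocale gG: gsys "carrier G" "\<lambda>R. NR G X act R" I
  by unfold_locales (simp_all add: NR_equiv NR_mono dirI)

lemma hatX_eq: "hatX X I = gX.ghat" by (simp add: hatX_def gX.ghat_def)
lemma embX_eq: "embX I = gX.gemb" by (rule ext) (simp add: embX_def gX.gemb_def)
lemma topX_eq: "topX X I = gX.gtop" by (simp add: topX_def gX.gtop_def hatX_eq)
lemma hatG_eq: "hatG G X act I = gG.ghat" by (simp add: hatG_def gG.ghat_def)
lemma embG_eq: "embG G X act I = gG.gemb" by (rule ext) (simp add: embG_def gG.gemb_def)
lemma topG_eq: "topG G X act I = gG.gtop" by (simp add: topG_def gG.gtop_def hatG_eq)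

definition M where "M R = {(d, e). d \<in> hatG G X act I \<and> e \<in> hatG G X act I \<and> d R = e R}"

lemma closR_eq: "R \<in> I \<Longrightarrow> closR X I R = {(c, c'). c \<in> hatX X I \<and> c' \<in> hatX X I \<and> c R = c' R}"
  unfolding closR_def topX_eq embX_eq hatX_eq using gX.closure_eq[of R] by simp

lemma closNR_eq: "R \<in> I \<Longrightarrow> closNR G X act I R = M R"
  unfolding closNR_def topG_eq embG_eq M_def hatG_eq using gG.closure_eq[of R] by simp

lemma someG: "d \<in> hatG G X act I \<Longrightarrow> R \<in> I \<Longrightarrow> (SOME g. g \<in> d R) \<in> d R \<and> (SOME g. g \<in> d R) \<in> carrier G"
proof -
  assume d: "d \<in> hatG G X act I" and R: "R \<in> I"
  have "(SOME g. g \<in> d R) \<in> d R" using gG.ghat_ne[OF d[unfolded hatG_eq] R] by (meson someI)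
  then show ?thesis using gG.ghat_sub[OF d[unfolded hatG_eq] R] by blast
qed

lemma someX: "c \<in> hatX X I \<Longrightarrow> R \<in> I \<Longrightarrow> (SOME x. x \<in> c R) \<in> c R \<and> (SOME x. x \<in> c R) \<in> X"
proof -
  assume c: "c \<in> hatX X I" and R: "R \<in> I"
  have "(SOME x. x \<in> c R) \<in> c R" using gX.ghat_ne[OF c[unfolded hatX_eq] R] by (meson someI)
  then show ?thesis using gX.ghat_sub[OF c[unfolded hatX_eq] R] by blast
qed

lemma hat_act_val: "R \<in> I \<Longrightarrow> hat_act act I d c R = R `` {act (SOME g. g \<in> d R) (SOME x. x \<in> c R)}"
  by (simp add: hat_act_def)

lemma hat_mult_val: "R \<in> I \<Longrightarrow> hat_mult G X act I d e R = N R `` {(SOME g. g \<in> d R) \<otimes>\<^bsub>G\<^esub> (SOME h. h \<in> e R)}"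
  by (simp add: hat_mult_def)

lemma relG: "d \<in> hatG G X act I \<Longrightarrow> R \<in> I \<Longrightarrow> S \<in> I \<Longrightarrow> R \<subseteq> S \<Longrightarrow> a \<in> d R \<Longrightarrow> b \<in> d S \<Longrightarrow> (a, b) \<in> N S"
proof -
  assume d: "d \<in> hatG G X act I" and R: "R \<in> I" and S: "S \<in> I" and RS: "R \<subseteq> S" and a: "a \<in> d R" and b: "b \<in> d S"
  have "d R \<subseteq> d S" using d R S RS unfolding hatG_def by blast
  then have "{a, b} \<subseteq> d S" using a b by blast
  moreover have "d S \<in> carrier G // N S" using d S unfolding hatG_def by blast
  ultimately show ?thesis using in_quotient_imp_in_rel[OF NR_equiv[OF S]] by blast
qed

lemma relX: "c \<in> hatX X I \<Longrightarrow> R \<in> I \<Longrightarrow> S \<in> I \<Longrightarrow> R \<subseteq> S \<Longrightarrow> a \<in> c R \<Longrightarrow> b \<in> c S \<Longrightarrow> (a, b) \<in> S"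
proof -
  assume c: "c \<in> hatX X I" and R: "R \<in> I" and S: "S \<in> I" and RS: "R \<subseteq> S" and a: "a \<in> c R" and b: "b \<in> c S"
  have "c R \<subseteq> c S" using c R S RS unfolding hatX_def by blast
  then have "{a, b} \<subseteq> c S" using a b by blast
  moreover have "c S \<in> X // S" using c S unfolding hatX_def by blast
  ultimately show ?thesis using in_quotient_imp_in_rel[OF eqvR[OF S]] by blast
qed

lemma hat_act_in: "d \<in> hatG G X act I \<Longrightarrow> c \<in> hatX X I \<Longrightarrow> hat_act act I d c \<in> hatX X I"
proof -
  assume d: "d \<in> hatG G X act I" and c: "c \<in> hatX X I"
  have P: "hat_act act I d c \<in> (\<Pi>\<^sub>E R\<in>I. X // R)"
    unfolding hat_act_def restrict_PiE_iff
  proof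
    fix R assume R: "R \<in> I"
    show "R `` {act (SOME g. g \<in> d R) (SOME x. x \<in> c R)} \<in> X // R"
      using someG[OF d R] someX[OF c R] act_in by (blast intro: quotientI)
  qed
  have "hat_act act I d c R \<subseteq> hat_act act I d c S" if R: "R \<in> I" and S: "S \<in> I" and RS: "R \<subseteq> S" for R S
  proof -
    define gR where "gR = (SOME g. g \<in> d R)"
    define gS where "gS = (SOME g. g \<in> d S)"
    define xR where "xR = (SOME x. x \<in> c R)"
    define xS where "xS = (SOME x. x \<in> c S)"
    have gg: "(gR, gS) \<in> N S" using relG[OF d R S RS] someG[OF d R] someG[OF d S] unfolding gR_def gS_def by blast
    have xx: "(xR, xS) \<in> S" using relX[OF c R S RS] someX[OF c R] someX[OF c S] unfolding xR_def xS_def by blast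
    have w: "(act gR xR, act gS xS) \<in> S" using NR_wd[OF S gg xx] .
    have "R `` {act gR xR} \<subseteq> S `` {act gR xR}" using RS by blast
    also have "\<dots> = S `` {act gS xS}" using equiv_class_eq[OF eqvR[OF S] w] .
    finally show ?thesis unfolding hat_act_val[OF R] hat_act_val[OF S] gR_def gS_def xR_def xS_def .
  qed
  then show ?thesis using P unfolding hatX_def by blast
qed

lemma hat_mult_in: "a \<in> hatG G X act I \<Longrightarrow> b \<in> hatG G X act I \<Longrightarrow> hat_mult G X act I a b \<in> hatG G X act I"
proof -
  assume a: "a \<in> hatG G X act I" and b: "b \<in> hatG G X act I"
  have P: "hat_mult G X act I a b \<in> (\<Pi>\<^sub>E R\<in>I. carrier G // N R)"
    unfolding hat_mult_def restrict_PiE_iff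
  proof
    fix R assume R: "R \<in> I"
    have "(SOME g. g \<in> a R) \<otimes>\<^bsub>G\<^esub> (SOME h. h \<in> b R) \<in> carrier G"
      using monoid.m_closed[OF group.is_monoid[OF grp]] someG[OF a R] someG[OF b R] by blast
    then show "N R `` {(SOME g. g \<in> a R) \<otimes>\<^bsub>G\<^esub> (SOME h. h \<in> b R)} \<in> carrier G // N R"
      by (rule quotientI)
  qed
  have "hat_mult G X act I a b R \<subseteq> hat_mult G X act I a b S" if R: "R \<in> I" and S: "S \<in> I" and RS: "R \<subseteq> S" for R S
  proof -
    define gR where "gR = (SOME g. g \<in> a R)"
    define gS where "gS = (SOME g. g \<in> a S)"
    define hR where "hR = (SOME g. g \<in> b R)"
    define hS where "hS = (SOME g. g \<in> b S)"
    have gg: "(gR, gS) \<in> N S" using relG[OF a R S RS] someG[OF a R] someG[OF a S] unfolding gR_def gS_def by blast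
    have hh: "(hR, hS) \<in> N S" using relG[OF b R S RS] someG[OF b R] someG[OF b S] unfolding hR_def hS_def by blast
    have w: "(gR \<otimes>\<^bsub>G\<^esub> hR, gS \<otimes>\<^bsub>G\<^esub> hS) \<in> N S" using NR_mult[OF S gg hh] .
    have "N R `` {gR \<otimes>\<^bsub>G\<^esub> hR} \<subseteq> N S `` {gR \<otimes>\<^bsub>G\<^esub> hR}" using NR_mono[OF RS] by blast
    also have "\<dots> = N S `` {gS \<otimes>\<^bsub>G\<^esub> hS}" using equiv_class_eq[OF NR_equiv[OF S] w] .
    finally show ?thesis unfolding hat_mult_val[OF R] hat_mult_val[OF S] gR_def gS_def hR_def hS_def .
  qed
  then show ?thesis using P unfolding hatG_def by blast
qed

lemma hatG_class: "d \<in> hatG G X act I \<Longrightarrow> R \<in> I \<Longrightarrow> d R = N R `` {SOME g. g \<in> d R}"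
  using gG.ghat_eq[of d R R "SOME g. g \<in> d R"] someG[of d R] hatG_eq by blast

lemma N_closR_eq: "R \<in> I \<Longrightarrow> N_closR G X act I R = M R"
proof (intro equalityI subsetI)
  fix z assume R: "R \<in> I" and z: "z \<in> N_closR G X act I R"
  obtain d e where de: "z = (d, e)" by (cases z) blast
  have d: "d \<in> hatG G X act I" and e: "e \<in> hatG G X act I"
    and H: "\<forall>c\<in>hatX X I. (hat_act act I d c, hat_act act I e c) \<in> closR X I R"
    using z de unfolding N_closR_def by blast+
  define g where "g = (SOME g. g \<in> d R)"
  define h where "h = (SOME g. g \<in> e R)"
  have g: "g \<in> carrier G" using someG[OF d R] unfolding g_def by blast
  have h: "h \<in> carrier G" using someG[OF e R] unfolding h_def by blast
  have "\<forall>x\<in>X. R `` {act g (SOME y. y \<in> R `` {x})} = R `` {act h (SOME y. y \<in> R `` {x})}"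
  proof
    fix x assume x: "x \<in> X"
    have cx: "embX I x \<in> hatX X I" using gX.gemb_in[OF x] unfolding embX_eq hatX_eq .
    have cR: "embX I x R = R `` {x}" using R by (simp add: embX_def)
    have "(hat_act act I d (embX I x), hat_act act I e (embX I x)) \<in> closR X I R" using H cx by blast
    then have "hat_act act I d (embX I x) R = hat_act act I e (embX I x) R"
      unfolding closR_eq[OF R] by blast
    then show "R `` {act g (SOME y. y \<in> R `` {x})} = R `` {act h (SOME y. y \<in> R `` {x})}"
      unfolding hat_act_val[OF R] cR g_def h_def .
  qed
  then have "(g, h) \<in> N R" using NR_iff[OF R g h] by blast
  then have "d R = e R" using hatG_class[OF d R] hatG_class[OF e R] equiv_class_eq[OF NR_equiv[OF R]]
    unfolding g_def h_def by metis
  then show "z \<in> M R" using d e de unfolding M_def by blast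
next
  fix z assume R: "R \<in> I" and z: "z \<in> M R"
  obtain d e where de: "z = (d, e)" by (cases z) blast
  have d: "d \<in> hatG G X act I" and e: "e \<in> hatG G X act I" and eq: "d R = e R"
    using z de unfolding M_def by blast+
  have "(hat_act act I d c, hat_act act I e c) \<in> closR X I R" if c: "c \<in> hatX X I" for c
  proof -
    have "hat_act act I d c R = hat_act act I e c R" unfolding hat_act_val[OF R] eq ..
    then show ?thesis unfolding closR_eq[OF R] using hat_act_in[OF d c] hat_act_in[OF e c] by blast
  qed
  then show "z \<in> N_closR G X act I R" using d e de unfolding N_closR_def by blast
qed

lemma M_mono: "T \<in> I \<Longrightarrow> R \<in> I \<Longrightarrow> T \<subseteq> R \<Longrightarrow> M T \<subseteq> M R"
proof
  fix z assume T: "T \<in> I" and R: "R \<in> I" and TR: "T \<subseteq> R" and z: "z \<in> M T"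
  obtain d e where de: "z = (d, e)" by (cases z) blast
  have d: "d \<in> hatG G X act I" and e: "e \<in> hatG G X act I" and eq: "d T = e T"
    using z de unfolding M_def by blast+
  define a where "a = (SOME g. g \<in> d T)"
  have ad: "a \<in> d T" using someG[OF d T] unfolding a_def by blast
  then have ae: "a \<in> e T" using eq by simp
  have "d R = N R `` {a}" using gG.ghat_eq[OF d[unfolded hatG_eq] T R TR ad] .
  moreover have "e R = N R `` {a}" using gG.ghat_eq[OF e[unfolded hatG_eq] T R TR ae] .
  ultimately show "z \<in> M R" using d e de unfolding M_def by simp
qed

lemma M_equiv: "R \<in> I \<Longrightarrow> equiv (hatG G X act I) (M R)"
  by (rule equivI) (auto simp: M_def refl_on_def sym_on_def trans_on_def)

lemma M_fin: "R \<in> I \<Longrightarrow> finite (hatG G X act I // M R)"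
proof -
  assume R: "R \<in> I"
  have "hatG G X act I // M R \<subseteq> (\<lambda>K. {e \<in> hatG G X act I. e R = K}) ` (carrier G // N R)"
  proof
    fix C assume "C \<in> hatG G X act I // M R"
    then obtain d where d: "d \<in> hatG G X act I" and C: "C = M R `` {d}" by (rule quotientE)
    have "C = {e \<in> hatG G X act I. e R = d R}" using C d unfolding M_def by auto
    moreover have "d R \<in> carrier G // N R" using d R unfolding hatG_def by blast
    ultimately show "C \<in> (\<lambda>K. {e \<in> hatG G X act I. e R = K}) ` (carrier G // N R)" by blast
  qed
  moreover have "finite ((\<lambda>K. {e \<in> hatG G X act I. e R = K}) ` (carrier G // N R))"
    using NR_fin[OF R] by (rule finite_imageI)
  ultimately show ?thesis by (rule finite_subset)
qed

lemma M_cong_aux: "R \<in> I \<Longrightarrow> (a, b) \<in> M R \<Longrightarrow> (c, d) \<in> M R \<Longrightarrow>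
   (hat_mult G X act I a c, hat_mult G X act I b d) \<in> M R"
proof -
  assume R: "R \<in> I" and p: "(a, b) \<in> M R" and q: "(c, d) \<in> M R"
  have a: "a \<in> hatG G X act I" "b \<in> hatG G X act I" "a R = b R" using p unfolding M_def by blast+
  have c: "c \<in> hatG G X act I" "d \<in> hatG G X act I" "c R = d R" using q unfolding M_def by blast+
  have "hat_mult G X act I a c R = hat_mult G X act I b d R"
    unfolding hat_mult_val[OF R] a(3) c(3) ..
  then show ?thesis unfolding M_def using hat_mult_in a c by blast
qed

lemma M_cong: "R \<in> I \<Longrightarrow> cofinite_congruence (hatG G X act I) (hat_mult G X act I) (M R)"
proof -
  assume R: "R \<in> I"
  have "\<forall>(a, b)\<in>M R. \<forall>(c, d)\<in>M R. (hat_mult G X act I a c, hat_mult G X act I b d) \<in> M R"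
    by (clarify, rule M_cong_aux[OF R]) 
  then show ?thesis unfolding cofinite_congruence_def cofinite_equiv_def using M_equiv[OF R] M_fin[OF R] by blast
qed

lemma final: "fund_system_cofinite_congruences (hatG G X act I) (hat_mult G X act I)
           {N_closR G X act I R | R. R \<in> I}
       \<and> fund_system_cofinite_congruences (hatG G X act I) (hat_mult G X act I)
           {closNR G X act I R | R. R \<in> I}
       \<and> equivalent_bases {N_closR G X act I R | R. R \<in> I} {closNR G X act I R | R. R \<in> I}"
proof -
  have e1: "{N_closR G X act I R | R. R \<in> I} = M ` I"
    unfolding Setcompr_eq_image by (rule image_cong) (simp_all add: N_closR_eq)
  have e2: "{closNR G X act I R | R. R \<in> I} = M ` I"
    unfolding Setcompr_eq_image by (rule image_cong) (simp_all add: closNR_eq)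
  have fs: "fund_system_cofinite_congruences (hatG G X act I) (hat_mult G X act I) (M ` I)"
    unfolding fund_system_cofinite_congruences_def
  proof (intro conjI ballI)
    show "M ` I \<noteq> {}" using neI by blast
    fix A assume "A \<in> M ` I"
    then obtain R where R: "R \<in> I" "A = M R" by blast
    show "cofinite_congruence (hatG G X act I) (hat_mult G X act I) A" using M_cong R by simp
  next
    fix A B assume "A \<in> M ` I" "B \<in> M ` I"
    then obtain R S where R: "R \<in> I" "A = M R" and S: "S \<in> I" "B = M S" by blast
    obtain T where T: "T \<in> I" "T \<subseteq> R" "T \<subseteq> S" using dirI[OF R(1) S(1)] by blast
    have "M T \<subseteq> A \<inter> B" using M_mono[OF T(1) R(1) T(2)] M_mono[OF T(1) S(1) T(3)] R S by blast
    then show "\<exists>C\<in>M ` I. C \<subseteq> A \<inter> B" using T(1) by blast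
  qed
  show ?thesis unfolding e1 e2 equivalent_bases_def using fs by blast
qed

end

theorem mainTheorem9:
  fixes G :: "('g, 'm) monoid_scheme"
    and V E :: "'x set" and s t bar :: "'x \<Rightarrow> 'x"
    and U :: "'x rel set" and act :: "'g \<Rightarrow> 'x \<Rightarrow> 'x" and I :: "'x rel set"
  assumes "group G"
    and "cofinite_graph V E s t bar U"
    and "graph_action G V E s t bar act"
    and "faithful_action G (V \<union> E) act"
    and "unif_equicontinuous G act U"
    and "fundamental_system U I"
    and "\<forall>R\<in>I. invariant_rel G act R \<and> compatible_rel V E s t bar R \<and> cofinite_equiv (V \<union> E) R"
  shows "fund_system_cofinite_congruences (hatG G (V \<union> E) act I) (hat_mult G (V \<union> E) act I)
           {N_closR G (V \<union> E) act I R | R. R \<in> I}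
       \<and> fund_system_cofinite_congruences (hatG G (V \<union> E) act I) (hat_mult G (V \<union> E) act I)
           {closNR G (V \<union> E) act I R | R. R \<in> I}
       \<and> equivalent_bases {N_closR G (V \<union> E) act I R | R. R \<in> I} {closNR G (V \<union> E) act I R | R. R \<in> I}"
proof -
  have ga: "group_action G (V \<union> E) act" using assms(3) unfolding graph_action_def by (rule conjunct1)
  have uni: "is_uniformity (V \<union> E) U"
    using assms(2) unfolding cofinite_graph_def hausdorff_uniformity_def by (elim conjE)
  have Une: "U \<noteq> {}" using uni unfolding is_uniformity_def by (elim conjE)
  have Uint: "\<forall>W\<in>U. \<forall>W'\<in>U. W \<inter> W' \<in> U" using uni unfolding is_uniformity_def by (elim conjE)
  have IU: "I \<subseteq> U" using assms(6) unfolding fundamental_system_def by (rule conjunct1)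
  have fund: "\<forall>W\<in>U. \<exists>W'\<in>I. W' \<subseteq> W" using assms(6) unfolding fundamental_system_def by (rule conjunct2)
  have loc: "thm9 G (V \<union> E) act I"
  proof (rule thm9.intro)
    show "group G" by (rule assms(1))
    show "group_action G (V \<union> E) act" by (rule ga)
  next
    fix R assume R: "R \<in> I"
    have "cofinite_equiv (V \<union> E) R" using bspec[OF assms(7) R] by (elim conjE)
    then show "equiv (V \<union> E) R" unfolding cofinite_equiv_def by (rule conjunct1)
  next
    fix R assume R: "R \<in> I"
    have "cofinite_equiv (V \<union> E) R" using bspec[OF assms(7) R] by (elim conjE)
    then show "finite ((V \<union> E) // R)" unfolding cofinite_equiv_def by (rule conjunct2)
  next
    fix R assume R: "R \<in> I"
    show "invariant_rel G act R" using bspec[OF assms(7) R] by (rule conjunct1)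
  next
    fix R S assume R: "R \<in> I" and S: "S \<in> I"
    have "R \<inter> S \<in> U" using Uint IU R S by blast
    then obtain T where "T \<in> I" "T \<subseteq> R \<inter> S" using fund by blast
    then show "\<exists>T\<in>I. T \<subseteq> R \<and> T \<subseteq> S" by blast
  next
    obtain W where "W \<in> U" using Une by blast
    then show "I \<noteq> {}" using fund by blast
  qed
  show ?thesis by (rule thm9.final[OF loc])
qed

end
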